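(* Let $R$ be a commutative Dedekind domain with field of fractions $Q$, and for each maximal ideal $P$ let $R_P$ be the localization at $P$. Then the torsion submodule of $\prod_P Q/R_P$ (product over all maximal ideals $P$) is $\bigoplus_P Q/R_P$. If moreover $R$ is not semilocal, $|R|=\alpha$, the set of maximal ideals has cardinality $\beta$, and $\alpha<\alpha^\beta$, then $Q\oplus\prod_P Q/R_P\cong\prod_P Q/R_P$ as $R$-modules.
   Context: $Q/R_P\cong E(R/P)$, the injective envelope of $R/P$. *)

theory Defs
  imports Main "HOL-Computational_Algebra.Fraction_Field"
begin

text \<open>The Dedekind domain R is the whole type 'a (class idom, i.e. a commutative
 integral domain); Q is its fraction field 'a fract.  R embeds in Q via r \<mapsto> Fract r 1.\<close>

definition ideal :: "'a::comm_ring_1 set \<Rightarrow> bool" where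
  "ideal I \<longleftrightarrow> 0 \<in> I \<and> (\<forall>x\<in>I. \<forall>y\<in>I. x + y \<in> I) \<and> (\<forall>r x. x \<in> I \<longrightarrow> r * x \<in> I)"

definition prime_ideal :: "'a::comm_ring_1 set \<Rightarrow> bool" where
  "prime_ideal P \<longleftrightarrow> ideal P \<and> P \<noteq> UNIV \<and> (\<forall>a b. a * b \<in> P \<longrightarrow> a \<in> P \<or> b \<in> P)"

definition maximal_ideal :: "'a::comm_ring_1 set \<Rightarrow> bool" where
  "maximal_ideal P \<longleftrightarrow> ideal P \<and> P \<noteq> UNIV \<and>
     (\<forall>J. ideal J \<and> P \<subseteq> J \<longrightarrow> J = P \<or> J = UNIV)"

definition noetherian :: "'a::comm_ring_1 itself \<Rightarrow> bool" where
  "noetherian _ \<longleftrightarrow> (\<forall>I :: nat \<Rightarrow> 'a set. (\<forall>n. ideal (I n) \<and> I n \<subseteq> I (Suc n))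
       \<longrightarrow> (\<exists>N. \<forall>n\<ge>N. I n = I N))"

definition integral_over_R :: "'a::idom fract \<Rightarrow> bool" where
  "integral_over_R x \<longleftrightarrow> (\<exists>n::nat. \<exists>c::nat \<Rightarrow> 'a. n \<ge> 1 \<and>
       x ^ n + (\<Sum>i<n. Fract (c i) 1 * x ^ i) = 0)"

definition integrally_closed :: "'a::idom itself \<Rightarrow> bool" where
  "integrally_closed _ \<longleftrightarrow> (\<forall>x :: 'a fract. integral_over_R x \<longrightarrow> (\<exists>r. x = Fract r 1))"

definition dedekind_domain :: "'a::idom itself \<Rightarrow> bool" where
  "dedekind_domain T \<longleftrightarrow> noetherian T \<and> integrally_closed T \<and>
     (\<forall>P :: 'a set. prime_ideal P \<and> P \<noteq> {0} \<longrightarrow> maximal_ideal P)"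

definition maxideals :: "'a::comm_ring_1 set set" where
  "maxideals = {P. maximal_ideal P}"

definition loc :: "'a::idom set \<Rightarrow> 'a fract set" where
  "loc P = {Fract a s | a s. s \<notin> P}"

definition smultQ :: "'a::idom \<Rightarrow> 'a fract \<Rightarrow> 'a fract" where
  "smultQ r q = Fract r 1 * q"

text \<open>An element of \<Prod>_P Q/R_P is represented by a family f :: maximal ideal \<Rightarrow> Q
 (values at non-maximal arguments are irrelevant), two families representing the same
 element iff they agree in every component Q/R_P.  Module operations are the componentwise
 ones on representatives.\<close>
definition prod_eq :: "('a::idom set \<Rightarrow> 'a fract) \<Rightarrow> ('a set \<Rightarrow> 'a fract) \<Rightarrow> bool" where
  "prod_eq f g \<longleftrightarrow> (\<forall>P\<in>maxideals. f P - g P \<in> loc P)"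

definition in_torsion :: "('a::idom set \<Rightarrow> 'a fract) \<Rightarrow> bool" where
  "in_torsion f \<longleftrightarrow> (\<exists>r::'a. r \<noteq> 0 \<and> prod_eq (\<lambda>P. smultQ r (f P)) (\<lambda>_. 0))"

definition in_dsum :: "('a::idom set \<Rightarrow> 'a fract) \<Rightarrow> bool" where
  "in_dsum f \<longleftrightarrow> finite {P \<in> maxideals. f P \<notin> loc P}"

text \<open>Representatives of Q \<oplus> \<Prod>_P Q/R_P are pairs.\<close>
definition sum_eq :: "'a::idom fract \<times> ('a set \<Rightarrow> 'a fract) \<Rightarrow> 'a fract \<times> ('a set \<Rightarrow> 'a fract) \<Rightarrow> bool" where
  "sum_eq x y \<longleftrightarrow> fst x = fst y \<and> prod_eq (snd x) (snd y)"

text \<open>phi (on representatives) induces an R-module isomorphism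
 Q \<oplus> \<Prod>_P Q/R_P \<rightarrow> \<Prod>_P Q/R_P: well defined, additive, R-linear, injective, surjective.\<close>
definition is_iso_Q_plus_prod :: "('a::idom fract \<times> ('a set \<Rightarrow> 'a fract) \<Rightarrow> ('a set \<Rightarrow> 'a fract)) \<Rightarrow> bool" where
  "is_iso_Q_plus_prod \<phi> \<longleftrightarrow>
     (\<forall>x y. sum_eq x y \<longrightarrow> prod_eq (\<phi> x) (\<phi> y)) \<and>
     (\<forall>q f q' f'. prod_eq (\<phi> (q + q', \<lambda>P. f P + f' P)) (\<lambda>P. \<phi> (q, f) P + \<phi> (q', f') P)) \<and>
     (\<forall>r q f. prod_eq (\<phi> (smultQ r q, \<lambda>P. smultQ r (f P))) (\<lambda>P. smultQ r (\<phi> (q, f) P))) \<and>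
     (\<forall>x y. prod_eq (\<phi> x) (\<phi> y) \<longrightarrow> sum_eq x y) \<and>
     (\<forall>g. \<exists>x. prod_eq (\<phi> x) g)"

end

theory Submission
  imports Defs "HOL-Library.Function_Algebras" "HOL.Vector_Spaces" "HOL-Library.Nat_Bijection"
begin

lemma ideal_0: "ideal I \<Longrightarrow> 0 \<in> I" by (simp add: ideal_def)
lemma ideal_add: "ideal I \<Longrightarrow> x \<in> I \<Longrightarrow> y \<in> I \<Longrightarrow> x + y \<in> I" by (simp add: ideal_def)
lemma ideal_mult: "ideal I \<Longrightarrow> x \<in> I \<Longrightarrow> r * x \<in> I" by (simp add: ideal_def)
lemma ideal_mult2: "ideal I \<Longrightarrow> x \<in> I \<Longrightarrow> x * r \<in> I" using ideal_mult[of I x r] by (simp add: mult.commute)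

lemma ideal_one: "ideal I \<Longrightarrow> 1 \<in> I \<Longrightarrow> I = UNIV"
  using ideal_mult2[of I 1] by auto

definition addgen :: "'a::comm_ring_1 set \<Rightarrow> 'a \<Rightarrow> 'a set" where
  "addgen I a = {p + x * a | p x. p \<in> I}"

lemma addgen_iff: "z \<in> addgen I a \<longleftrightarrow> (\<exists>p x. p \<in> I \<and> z = p + x * a)"
  unfolding addgen_def by blast

lemma addgenI: "p \<in> I \<Longrightarrow> z = p + x * a \<Longrightarrow> z \<in> addgen I a"
  unfolding addgen_iff by blast

lemma ideal_addgen: "ideal I \<Longrightarrow> ideal (addgen I a)"
  unfolding ideal_def[of "addgen I a"]
proof (intro conjI ballI allI impI)
  assume I: "ideal I"
  show "0 \<in> addgen I a" by (rule addgenI[of 0 _ _ 0]) (simp_all add: ideal_0[OF I])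
  fix x y assume "x \<in> addgen I a" "y \<in> addgen I a"
  then obtain p1 x1 p2 x2 where "x = p1 + x1 * a" "y = p2 + x2 * a" "p1 \<in> I" "p2 \<in> I"
    unfolding addgen_iff by blast
  then show "x + y \<in> addgen I a"
    by (intro addgenI[of "p1 + p2" _ _ "x1 + x2"]) (simp_all add: ideal_add[OF I] algebra_simps)
next
  fix r x assume I: "ideal I" and "x \<in> addgen I a"
  then obtain p1 x1 where "x = p1 + x1 * a" "p1 \<in> I" unfolding addgen_iff by blast
  then show "r * x \<in> addgen I a"
    by (intro addgenI[of "r * p1" _ _ "r * x1"]) (simp_all add: ideal_mult[OF I] ideal_mult2[OF I] algebra_simps)
qed

lemma addgen_sup: "ideal I \<Longrightarrow> I \<subseteq> addgen I a"
proof
  fix z assume "z \<in> I"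
  then show "z \<in> addgen I a" by (rule addgenI[of _ _ _ 0]) simp
qed

lemma addgen_a: "ideal I \<Longrightarrow> a \<in> addgen I a"
  by (rule addgenI[of 0 _ _ 1]) (simp_all add: ideal_0)

lemma addgen_le:
  assumes P: "ideal P" and IP: "I \<subseteq> P" and a: "a \<in> P" shows "addgen I a \<subseteq> P"
proof
  fix z assume "z \<in> addgen I a"
  then obtain p x where px: "p \<in> I" "z = p + x * a" unfolding addgen_iff by blast
  have "p \<in> P" using px(1) IP by blast
  moreover have "x * a \<in> P" using ideal_mult[OF P a] .
  ultimately show "z \<in> P" unfolding px(2) by (rule ideal_add[OF P])
qed

lemma maximal_prime:
  assumes P: "maximal_ideal P" and ab: "a * b \<in> P"
  shows "a \<in> P \<or> b \<in> P"
proof (rule ccontr)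
  assume n: "\<not> (a \<in> P \<or> b \<in> P)"
  have iP: "ideal P" using P by (simp add: maximal_ideal_def)
  have "addgen P a = P \<or> addgen P a = UNIV"
    using P ideal_addgen[OF iP] addgen_sup[OF iP] by (simp add: maximal_ideal_def)
  moreover have "addgen P a \<noteq> P" using addgen_a[OF iP, of a] n by auto
  ultimately have "1 \<in> addgen P a" by auto
  then obtain p x where px: "1 = p + x * a" "p \<in> P" unfolding addgen_def by auto
  have "b = b * (p + x * a)" using px(1) by simp
  then have "b = b * p + x * (a * b)" by (simp add: algebra_simps)
  also have "\<dots> \<in> P" using iP px ab ideal_add ideal_mult ideal_mult2 by blast
  finally show False using n by simp
qed

lemma maximal_not1: "maximal_ideal P \<Longrightarrow> 1 \<notin> P"
  using ideal_one maximal_ideal_def by blast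

lemma maximal_prime_ideal: "maximal_ideal P \<Longrightarrow> prime_ideal P"
  using maximal_prime by (auto simp: prime_ideal_def maximal_ideal_def)

definition bad :: "'a::comm_ring_1 set \<Rightarrow> bool" where
  "bad I \<longleftrightarrow> ideal I \<and> I \<noteq> {0} \<and> infinite {P. maximal_ideal P \<and> I \<subseteq> P}"

lemma maximal_ideal_ideal: "maximal_ideal P \<Longrightarrow> ideal P" by (simp add: maximal_ideal_def)
lemma maximal_ideal_nU: "maximal_ideal P \<Longrightarrow> P \<noteq> UNIV" by (simp add: maximal_ideal_def)
lemma maximal_ideal_max: "maximal_ideal P \<Longrightarrow> ideal J \<Longrightarrow> P \<subseteq> J \<Longrightarrow> J = P \<or> J = UNIV"
  by (simp add: maximal_ideal_def)

lemma bad_step: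
  fixes I :: "'a::idom set" and T :: "'a itself"
  assumes D: "dedekind_domain T" and b: "bad I"
  shows "\<exists>J. bad J \<and> I \<subset> J"
proof -
  have iI: "ideal I" and nz: "I \<noteq> {0}" and inf: "infinite {P. maximal_ideal P \<and> I \<subseteq> P}"
    using b by (auto simp: bad_def)
  have nU: "I \<noteq> UNIV"
  proof
    assume "I = UNIV"
    then have "{P. maximal_ideal P \<and> I \<subseteq> P} = {}" using maximal_ideal_nU by blast
    then show False using inf by (metis finite.emptyI)
  qed
  have "\<not> prime_ideal I"
  proof
    assume pI: "prime_ideal I"
    then have mI: "maximal_ideal I" using D nz by (simp add: dedekind_domain_def)
    have "{P. maximal_ideal P \<and> I \<subseteq> P} \<subseteq> {I}"
    proof
      fix P assume "P \<in> {P. maximal_ideal P \<and> I \<subseteq> P}"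
      then have "maximal_ideal P" "I \<subseteq> P" by auto
      then have "P = I" using maximal_ideal_max[OF mI maximal_ideal_ideal] maximal_ideal_nU by blast
      then show "P \<in> {I}" by simp
    qed
    moreover have "finite {I}" by simp
    ultimately have "finite {P. maximal_ideal P \<and> I \<subseteq> P}" by (rule finite_subset)
    then show False using inf by simp
  qed
  then obtain a b where ab: "a * b \<in> I" "a \<notin> I" "b \<notin> I"
    using iI nU unfolding prime_ideal_def by blast
  have sub: "{P. maximal_ideal P \<and> I \<subseteq> P} \<subseteq>
      {P. maximal_ideal P \<and> addgen I a \<subseteq> P} \<union> {P. maximal_ideal P \<and> addgen I b \<subseteq> P}"
  proof
    fix P assume "P \<in> {P. maximal_ideal P \<and> I \<subseteq> P}"
    then have m: "maximal_ideal P" and s: "I \<subseteq> P" by auto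
    have iP: "ideal P" using m by (rule maximal_ideal_ideal)
    have "a * b \<in> P" using ab(1) s by blast
    then have "a \<in> P \<or> b \<in> P" using maximal_prime[OF m] by blast
    then have "addgen I a \<subseteq> P \<or> addgen I b \<subseteq> P" using addgen_le[OF iP s] by blast
    then show "P \<in> {P. maximal_ideal P \<and> addgen I a \<subseteq> P} \<union> {P. maximal_ideal P \<and> addgen I b \<subseteq> P}"
      using m by blast
  qed
  have nz2: "addgen I c \<noteq> {0}" for c
  proof
    assume "addgen I c = {0}"
    then have "I \<subseteq> {0}" using addgen_sup[OF iI, of c] by simp
    then show False using nz ideal_0[OF iI] by blast
  qed
  have "infinite {P. maximal_ideal P \<and> addgen I a \<subseteq> P} \<or> infinite {P. maximal_ideal P \<and> addgen I b \<subseteq> P}"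
  proof (rule ccontr)
    assume "\<not> ?thesis"
    then have "finite ({P. maximal_ideal P \<and> addgen I a \<subseteq> P} \<union> {P. maximal_ideal P \<and> addgen I b \<subseteq> P})"
      by simp
    then have "finite {P. maximal_ideal P \<and> I \<subseteq> P}" using sub by (rule finite_subset[rotated])
    then show False using inf by simp
  qed
  moreover have "I \<subset> addgen I a" using addgen_sup[OF iI, of a] addgen_a[OF iI, of a] ab(2) by blast
  moreover have "I \<subset> addgen I b" using addgen_sup[OF iI, of b] addgen_a[OF iI, of b] ab(3) by blast
  moreover have "ideal (addgen I a)" "ideal (addgen I b)" using ideal_addgen[OF iI] by auto
  ultimately show ?thesis using nz2 unfolding bad_def by blast
qed

lemma finite_max:
  fixes r :: "'a::idom" and T :: "'a itself"
  assumes D: "dedekind_domain T" and r: "r \<noteq> 0"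
  shows "finite {P. maximal_ideal P \<and> r \<in> P}"
proof (rule ccontr)
  assume inf: "infinite {P. maximal_ideal P \<and> r \<in> P}"
  define I0 where "I0 = {x * r | x. True}"
  have iI0: "ideal I0" unfolding ideal_def[of I0]
  proof (intro conjI allI impI ballI)
    have "0 = 0 * r" by simp
    then show "0 \<in> I0" unfolding I0_def by blast
    fix x y assume "x \<in> I0" "y \<in> I0"
    then obtain u v where "x = u * r" "y = v * r" unfolding I0_def by blast
    then have "x + y = (u + v) * r" by (simp add: algebra_simps)
    then show "x + y \<in> I0" unfolding I0_def by blast
  next
    fix s x assume "x \<in> I0"
    then obtain u where "x = u * r" unfolding I0_def by blast
    then have "s * x = (s * u) * r" by (simp add: algebra_simps)
    then show "s * x \<in> I0" unfolding I0_def by blast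
  qed
  have eq: "{P. maximal_ideal P \<and> r \<in> P} = {P. maximal_ideal P \<and> I0 \<subseteq> P}"
  proof (intro Collect_cong iffI conjI)
    fix P assume a: "maximal_ideal P \<and> r \<in> P"
    then show "maximal_ideal P" by simp
    show "I0 \<subseteq> P"
    proof
      fix z assume "z \<in> I0"
      then obtain u where "z = u * r" unfolding I0_def by blast
      then show "z \<in> P" using ideal_mult[OF maximal_ideal_ideal, of P r u] a by simp
    qed
  next
    fix P assume a: "maximal_ideal P \<and> I0 \<subseteq> P"
    then show "maximal_ideal P" by simp
    have "r = 1 * r" by simp
    then have "r \<in> I0" unfolding I0_def by blast
    then show "r \<in> P" using a by blast
  qed
  have "r = 1 * r" by simp
  then have "r \<in> I0" unfolding I0_def by blast
  then have "I0 \<noteq> {0}" using r by blast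
  then have b0: "bad I0" using iI0 inf eq unfolding bad_def by simp
  define nxt where "nxt = (\<lambda>I::'a set. SOME J. bad J \<and> I \<subset> J)"
  have nxt: "bad (nxt I) \<and> I \<subset> nxt I" if "bad I" for I
  proof -
    have "\<exists>J. bad J \<and> I \<subset> J" using bad_step[OF D that] .
    from someI_ex[OF this] show ?thesis unfolding nxt_def .
  qed
  define C where "C = (\<lambda>n. (nxt ^^ n) I0)"
  have C0: "C 0 = I0" unfolding C_def by simp
  have CS: "C (Suc n) = nxt (C n)" for n unfolding C_def by simp
  have Cb: "bad (C n)" for n
  proof (induction n)
    case 0 show ?case unfolding C0 by (rule b0)
  next
    case (Suc n) show ?case unfolding CS using nxt[OF Suc] by blast
  qed
  have Cs: "C n \<subset> C (Suc n)" for n unfolding CS using nxt[OF Cb[of n]] by blast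
  have "noetherian T" using D by (simp add: dedekind_domain_def)
  then have noe: "\<forall>I :: nat \<Rightarrow> 'a set. (\<forall>n. ideal (I n) \<and> I n \<subseteq> I (Suc n))
       \<longrightarrow> (\<exists>N. \<forall>n\<ge>N. I n = I N)" unfolding noetherian_def .
  have "ideal (C n) \<and> C n \<subseteq> C (Suc n)" for n
  proof
    show "ideal (C n)" using Cb[of n] unfolding bad_def by (rule conjunct1)
    show "C n \<subseteq> C (Suc n)" using Cs[of n] by (rule psubset_imp_subset)
  qed
  then have "\<forall>n. ideal (C n) \<and> C n \<subseteq> C (Suc n)" by (rule allI)
  moreover have "(\<forall>n. ideal (C n) \<and> C n \<subseteq> C (Suc n)) \<longrightarrow> (\<exists>N. \<forall>n\<ge>N. C n = C N)"
    using spec[OF noe, of C] by simp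
  ultimately have "\<exists>N. \<forall>n\<ge>N. C n = C N" by (rule rev_mp)
  then obtain N where N: "\<forall>n\<ge>N. C n = C N" by blast
  have "Suc N \<ge> N" by simp
  then have "C (Suc N) = C N" using N by blast
  then show False using Cs[of N] by simp
qed

lemma max_0: "maximal_ideal P \<Longrightarrow> 0 \<in> P" by (simp add: maximal_ideal_def ideal_def)

lemma notin_nz: "maximal_ideal P \<Longrightarrow> s \<notin> P \<Longrightarrow> s \<noteq> 0" using max_0 by blast

lemma locI: "s \<notin> P \<Longrightarrow> Fract a s \<in> loc P" by (auto simp: loc_def)

lemma locE: "q \<in> loc P \<Longrightarrow> (\<And>a s. s \<notin> P \<Longrightarrow> q = Fract a s \<Longrightarrow> thesis) \<Longrightarrow> thesis"
  by (auto simp: loc_def)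

lemma loc_R: "maximal_ideal P \<Longrightarrow> Fract r 1 \<in> loc P"
  using maximal_not1 locI by blast

lemma loc_0: "maximal_ideal P \<Longrightarrow> 0 \<in> loc P"
  using loc_R[of P 0] by (simp add: fract_collapse)

lemma loc_add: "maximal_ideal P \<Longrightarrow> x \<in> loc P \<Longrightarrow> y \<in> loc P \<Longrightarrow> x + y \<in> loc P"
proof -
  assume P: "maximal_ideal P" and x: "x \<in> loc P" and y: "y \<in> loc P"
  obtain a s where as: "s \<notin> P" "x = Fract a s" using x by (rule locE)
  obtain b t where bt: "t \<notin> P" "y = Fract b t" using y by (rule locE)
  have "s * t \<notin> P" using maximal_prime[OF P] as bt by blast
  then show ?thesis using as bt notin_nz[OF P] by (simp add: locI)
qed

lemma loc_mult: "maximal_ideal P \<Longrightarrow> x \<in> loc P \<Longrightarrow> y \<in> loc P \<Longrightarrow> x * y \<in> loc P"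
proof -
  assume P: "maximal_ideal P" and x: "x \<in> loc P" and y: "y \<in> loc P"
  obtain a s where as: "s \<notin> P" "x = Fract a s" using x by (rule locE)
  obtain b t where bt: "t \<notin> P" "y = Fract b t" using y by (rule locE)
  have "s * t \<notin> P" using maximal_prime[OF P] as bt by blast
  then show ?thesis using as bt by (simp add: locI)
qed

lemma loc_uminus: "x \<in> loc P \<Longrightarrow> - x \<in> loc P"
  by (erule locE) (simp add: locI)

lemma loc_diff: "maximal_ideal P \<Longrightarrow> x \<in> loc P \<Longrightarrow> y \<in> loc P \<Longrightarrow> x - y \<in> loc P"
  using loc_add[of P x "- y"] loc_uminus[of y P] by simp

lemma loc_div_mem:
  assumes P: "maximal_ideal P" and pi: "pi \<noteq> 0" "pi \<in> P" and l: "Fract r pi \<in> loc P"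
  shows "r \<in> P"
proof -
  obtain a s where as: "s \<notin> P" "Fract r pi = Fract a s" using l by (rule locE)
  have "r * s = a * pi" using as(2) notin_nz[OF P as(1)] pi(1) by (simp add: eq_fract(1))
  moreover have "a * pi \<in> P" using P pi(2) ideal_mult by (auto simp: maximal_ideal_def)
  ultimately show ?thesis using maximal_prime[OF P, of r s] as(1) by auto
qed

lemma part1:
  fixes T :: "'a::idom itself" and f :: "'a set \<Rightarrow> 'a fract"
  assumes D: "dedekind_domain T"
  shows "in_torsion f \<longleftrightarrow> in_dsum f"
proof
  assume "in_torsion f"
  then obtain r :: 'a where r: "r \<noteq> 0" "\<forall>P\<in>maxideals. Fract r 1 * f P - 0 \<in> loc P"
    unfolding in_torsion_def prod_eq_def smultQ_def by blast
  have "{P \<in> maxideals. f P \<notin> loc P} \<subseteq> {P. maximal_ideal P \<and> r \<in> P}"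
  proof safe
    fix P assume P: "P \<in> maxideals" "f P \<notin> loc P"
    then have m: "maximal_ideal P" by (simp add: maxideals_def)
    show "maximal_ideal P" by fact
    show "r \<in> P"
    proof (rule ccontr)
      assume "r \<notin> P"
      have "Fract r 1 * f P \<in> loc P" using r(2) P(1) by (simp only: diff_zero)
      moreover have "Fract 1 r \<in> loc P" using \<open>r \<notin> P\<close> by (rule locI)
      ultimately have "Fract 1 r * (Fract r 1 * f P) \<in> loc P"
        using loc_mult[OF m] by blast
      moreover have "Fract 1 r * (Fract r 1 * f P) = f P"
      proof -
        have "Fract 1 r * Fract r 1 = 1" using r(1) by (simp add: One_fract_def eq_fract)
        then show ?thesis by (simp add: mult.assoc[symmetric])
      qed
      ultimately show False using P by simp
    qed
  qed
  then show "in_dsum f" unfolding in_dsum_def by (rule finite_subset) (rule finite_max[OF D r(1)])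
next
  assume "in_dsum f"
  define B where "B = {P \<in> maxideals. f P \<notin> loc P}"
  have fB: "finite B" using \<open>in_dsum f\<close> by (simp add: in_dsum_def B_def)
  define den :: "'a set \<Rightarrow> 'a" where "den = (\<lambda>P. SOME s. s \<noteq> 0 \<and> (\<exists>a. f P = Fract a s))"
  have den: "den P \<noteq> 0 \<and> (\<exists>a. f P = Fract a (den P))" for P :: "'a set"
  proof -
    obtain a s where "f P = Fract a s" "s \<noteq> 0" by (rule Fract_cases)
    then have "\<exists>s. s \<noteq> 0 \<and> (\<exists>a. f P = Fract a s)" by blast
    from someI_ex[OF this] show ?thesis unfolding den_def .
  qed
  define r where "r = prod den B"
  have "\<forall>P\<in>B. den P \<noteq> 0" using den by blast
  then have r0: "r \<noteq> 0" unfolding r_def using fB by simp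
  have rr: "\<forall>P\<in>maxideals. Fract r 1 * f P \<in> loc P"
  proof
    fix P :: "'a set" assume P: "P \<in> maxideals"
    then have m: "maximal_ideal P" by (simp add: maxideals_def)
    show "Fract r 1 * f P \<in> loc P"
    proof (cases "P \<in> B")
      case True
      obtain a where a: "f P = Fract a (den P)" using den by blast
      have rP: "r = den P * prod den (B - {P})" unfolding r_def by (rule prod.remove[OF fB True])
      have "Fract r 1 * f P = Fract (den P * (prod den (B - {P}) * a)) (den P * 1)"
        unfolding a rP by (simp add: mult.assoc)
      also have "\<dots> = Fract (a * prod den (B - {P})) 1"
        using mult_fract_cancel[of "den P" "prod den (B - {P}) * a" 1] den[of P] by (simp add: mult.commute)
      finally have "Fract r 1 * f P = Fract (a * prod den (B - {P})) 1" .
      then show ?thesis using loc_R[OF m] by simp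
    next
      case False
      then have "f P \<in> loc P" using P unfolding B_def by blast
      then show ?thesis using loc_mult[OF m] loc_R[OF m] by blast
    qed
  qed
  show "in_torsion f" unfolding in_torsion_def prod_eq_def smultQ_def
  proof (intro exI[of _ r] conjI r0 ballI)
    fix P :: "'a set" assume "P \<in> maxideals"
    then have "Fract r 1 * f P \<in> loc P" using rr by blast
    then show "Fract r 1 * f P - 0 \<in> loc P" by (simp only: diff_zero)
  qed
qed


definition sc :: "'a::idom fract \<Rightarrow> ('a set \<Rightarrow> 'a fract) \<Rightarrow> ('a set \<Rightarrow> 'a fract)" where
  "sc c f = (\<lambda>P. c * f P)"

lemma sc_app[simp]: "sc c f P = c * f P" by (simp add: sc_def)

lemma vs_sc: "vector_space (sc :: 'a::idom fract \<Rightarrow> _)"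
  by unfold_locales (auto simp: sc_def fun_eq_iff algebra_simps)

lemma vs_Q: "vector_space ((*) :: 'a::field \<Rightarrow> 'a \<Rightarrow> 'a)"
  by unfold_locales (auto simp: algebra_simps)

lemma functional_exists:
  fixes L :: "('a::idom set \<Rightarrow> 'a fract) set"
  assumes L0: "0 \<in> L" and Ladd: "\<And>x y. x \<in> L \<Longrightarrow> y \<in> L \<Longrightarrow> x + y \<in> L"
    and Lsc: "\<And>c x. x \<in> L \<Longrightarrow> sc c x \<in> L" and e: "e \<notin> L"
  shows "\<exists>g. Vector_Spaces.linear sc ((*)) g \<and> (\<forall>x\<in>L. g x = 0) \<and> g e = 1"
proof -
  interpret vs: vector_space_pair sc "(*) :: 'a fract \<Rightarrow> _"
    using vs_sc vs_Q by (simp add: vector_space_pair_def)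
  have L: "vs.vs1.subspace L" using L0 Ladd Lsc by (simp add: vs.vs1.subspace_def)
  obtain B where B: "B \<subseteq> L" "vs.vs1.independent B" "L \<subseteq> vs.vs1.span B"
    using vs.vs1.maximal_independent_subset by blast
  have "vs.vs1.span B \<subseteq> L" using B(1) L vs.vs1.span_minimal by blast
  then have "e \<notin> vs.vs1.span B" using e by blast
  then have ind: "vs.vs1.independent (insert e B)" using B(2) vs.vs1.independent_insertI by blast
  obtain g where g: "Vector_Spaces.linear sc (*) g" "\<forall>x\<in>insert e B. g x = (if x = e then 1 else 0)"
    using vs.linear_independent_extend[OF ind, of "\<lambda>x. if x = e then 1 else 0"] by blast
  have eB: "e \<notin> B" using e B(1) by blast
  have "\<forall>x\<in>B. g x = 0" using g(2) eB by auto
  then have "\<forall>x\<in>vs.vs1.span B. g x = 0" using vs.linear_eq_0_on_span[OF g(1)] by blast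
  then show ?thesis using g B(3) by auto
qed


definition idx :: "(nat \<times> nat \<Rightarrow> 'a set) \<Rightarrow> 'a set \<Rightarrow> nat" where
  "idx G P = fst (inv G P)"

definition eG :: "(nat \<times> nat \<Rightarrow> 'a::idom set) \<Rightarrow> ('a set \<Rightarrow> 'a) \<Rightarrow> nat \<Rightarrow> 'a set \<Rightarrow> 'a fract" where
  "eG G pi n = (\<lambda>P. if P \<in> range G \<and> idx G P = n then Fract 1 (pi P) else 0)"

definition LG :: "(nat \<times> nat \<Rightarrow> 'a::idom set) \<Rightarrow> nat \<Rightarrow> ('a set \<Rightarrow> 'a fract) set" where
  "LG G n = {f. \<exists>r. r \<noteq> 0 \<and> (\<forall>m. Fract r 1 * f (G (n, m)) \<in> loc (G (n, m)))}"

definition shiftG :: "(nat \<times> nat \<Rightarrow> 'a::idom set) \<Rightarrow> ('a set \<Rightarrow> 'a) \<Rightarrow> (nat \<Rightarrow> 'a fract)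
    \<Rightarrow> ('a set \<Rightarrow> 'a fract) \<Rightarrow> ('a set \<Rightarrow> 'a fract)" where
  "shiftG G pi t f = (\<lambda>P. if P \<in> range G then f P + t (idx G P) * Fract 1 (pi P) else f P)"

locale iso_setup =
  fixes G :: "nat \<times> nat \<Rightarrow> 'a::idom set" and pi :: "'a set \<Rightarrow> 'a"
    and c :: "nat \<Rightarrow> ('a set \<Rightarrow> 'a fract) \<Rightarrow> 'a fract"
  assumes G_inj: "inj G" and G_max: "\<And>x. maximal_ideal (G x)"
    and c_lin: "\<And>n. Vector_Spaces.linear sc (*) (c n)"
    and c_L: "\<And>n f. f \<in> LG G n \<Longrightarrow> c n f = 0"
    and c_e: "\<And>n. c n (eG G pi n) = 1"
begin

lemma idx_G: "idx G (G (n, m)) = n"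
  unfolding idx_def using G_inj by simp

lemma c_add: "c n (f + g) = c n f + c n g"
  using c_lin[of n] unfolding Vector_Spaces.linear_iff by blast

lemma c_sc: "c n (sc a f) = a * c n f"
  using c_lin[of n] unfolding Vector_Spaces.linear_iff by blast

lemma c_0: "c n 0 = 0"
  using c_sc[of n 0 0] by (simp add: sc_def zero_fun_def)

lemma c_diff: "c n (f - g) = c n f - c n g"
proof -
  have "c n (f - g) + c n g = c n f" using c_add[of n "f - g" g] by simp
  then show ?thesis by (simp add: algebra_simps)
qed

lemma loc_valued_LG:
  assumes "\<And>P. P \<in> maxideals \<Longrightarrow> f P \<in> loc P"
  shows "f \<in> LG G n"
proof -
  have "\<forall>m. Fract 1 1 * f (G (n, m)) \<in> loc (G (n, m))"
    using assms G_max by (simp add: maxideals_def One_fract_def[symmetric])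
  then show ?thesis unfolding LG_def by (intro CollectI exI[of _ 1]) simp
qed

lemma c_dep:
  assumes "\<And>m. f (G (n, m)) = h (G (n, m))"
  shows "c n f = c n h"
proof -
  have "f - h \<in> LG G n"
  proof -
    have "\<forall>m. Fract 1 1 * (f - h) (G (n, m)) \<in> loc (G (n, m))"
      using assms loc_0[OF G_max] by simp
    then show ?thesis unfolding LG_def by (intro CollectI exI[of _ 1]) simp
  qed
  then have "c n (f - h) = 0" by (rule c_L)
  then show ?thesis by (simp add: c_diff)
qed

lemma c_shift: "c n (shiftG G pi t f) = c n f + t n"
proof -
  have "c n (shiftG G pi t f) = c n (f + sc (t n) (eG G pi n))"
    by (rule c_dep) (simp add: shiftG_def eG_def idx_G)
  also have "\<dots> = c n f + t n" by (simp add: c_add c_sc c_e)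
  finally show ?thesis .
qed

definition dd :: "'a fract \<Rightarrow> ('a set \<Rightarrow> 'a fract) \<Rightarrow> nat \<Rightarrow> 'a fract" where
  "dd q f n = (case n of 0 \<Rightarrow> q | Suc k \<Rightarrow> c k f)"

definition phi :: "'a fract \<times> ('a set \<Rightarrow> 'a fract) \<Rightarrow> ('a set \<Rightarrow> 'a fract)" where
  "phi x = shiftG G pi (\<lambda>n. dd (fst x) (snd x) n - c n (snd x)) (snd x)"

lemma c_phi: "c n (phi (q, f)) = dd q f n"
  unfolding phi_def by (simp add: c_shift)

lemma phi_diff: "phi (q, f) P - phi (q', f') P = phi (q - q', f - f') P"
  unfolding phi_def shiftG_def dd_def
  by (auto simp: c_diff algebra_simps split: nat.split)

lemma iso: "is_iso_Q_plus_prod phi"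
  unfolding is_iso_Q_plus_prod_def
proof (intro conjI allI impI)
  fix x y :: "'a fract \<times> ('a set \<Rightarrow> 'a fract)"
  assume "sum_eq x y"
  then obtain q f f' where xy: "x = (q, f)" "y = (q, f')" and pe: "prod_eq f f'"
    unfolding sum_eq_def by (metis prod.collapse)
  have fl: "(f - f') \<in> LG G n" for n
    by (rule loc_valued_LG) (use pe in \<open>simp add: prod_eq_def\<close>)
  have cn: "c n f = c n f'" for n using c_L[OF fl[of n]] by (simp add: c_diff)
  have "phi (q, f) P - phi (q, f') P = f P - f' P" for P
    unfolding phi_def shiftG_def dd_def by (auto simp: cn split: nat.split)
  then show "prod_eq (phi x) (phi y)" using pe by (simp add: xy prod_eq_def)
next
  fix q f q' f'
  show "prod_eq (phi (q + q', \<lambda>P. f P + f' P)) (\<lambda>P. phi (q, f) P + phi (q', f') P)"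
  proof -
    have "(\<lambda>P. f P + f' P) = f + f'" by (simp add: fun_eq_iff)
    then have "phi (q + q', \<lambda>P. f P + f' P) P = phi (q, f) P + phi (q', f') P" for P
      unfolding phi_def shiftG_def dd_def by (auto simp: c_add algebra_simps split: nat.split)
    then show ?thesis unfolding prod_eq_def by (simp add: maxideals_def loc_0)
  qed
next
  fix r q f
  show "prod_eq (phi (smultQ r q, \<lambda>P. smultQ r (f P))) (\<lambda>P. smultQ r (phi (q, f) P))"
  proof -
    have "(\<lambda>P. smultQ r (f P)) = sc (Fract r 1) f" by (simp add: fun_eq_iff smultQ_def)
    then have "phi (smultQ r q, \<lambda>P. smultQ r (f P)) P = smultQ r (phi (q, f) P)" for P
      unfolding phi_def shiftG_def dd_def smultQ_def by (auto simp: c_sc algebra_simps split: nat.split)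
    then show ?thesis unfolding prod_eq_def by (simp add: maxideals_def loc_0)
  qed
next
  fix x y :: "'a fract \<times> ('a set \<Rightarrow> 'a fract)"
  assume pe: "prod_eq (phi x) (phi y)"
  obtain q f q' f' where xy: "x = (q, f)" "y = (q', f')" by (metis prod.collapse)
  have pd: "\<And>P. P \<in> maxideals \<Longrightarrow> phi (q - q', f - f') P \<in> loc P"
    using pe by (simp add: prod_eq_def xy phi_diff)
  have "phi (q - q', f - f') \<in> LG G n" for n by (rule loc_valued_LG) (rule pd)
  then have dd0: "dd (q - q') (f - f') n = 0" for n using c_L c_phi by metis
  have qq: "q = q'" using dd0[of 0] by (simp add: dd_def)
  have ck: "c k (f - f') = 0" for k using dd0[of "Suc k"] by (simp add: dd_def)
  have "phi (q - q', f - f') P = f P - f' P" for P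
    unfolding phi_def shiftG_def using dd0 ck by simp
  then have "prod_eq f f'" using pd by (simp add: prod_eq_def)
  then show "sum_eq x y" using qq by (simp add: sum_eq_def xy)
next
  fix g :: "'a set \<Rightarrow> 'a fract"
  define u where "u = shiftG G pi (\<lambda>n. c (Suc n) g - c n g) g"
  have cu: "c n u = c (Suc n) g" for n unfolding u_def by (simp add: c_shift)
  have ddu: "dd (c 0 g) u n = c n g" for n by (cases n) (simp_all add: dd_def cu)
  have "phi (c 0 g, u) P = g P" for P
  proof -
    have "phi (c 0 g, u) P = (if P \<in> range G then u P + (c (idx G P) g - c (Suc (idx G P)) g) * Fract 1 (pi P) else u P)"
      unfolding phi_def shiftG_def fst_conv snd_conv ddu cu ..
    also have "\<dots> = g P" unfolding u_def shiftG_def by (simp add: algebra_simps)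
    finally show ?thesis .
  qed
  then have "phi (c 0 g, u) = g" by (simp add: fun_eq_iff)
  then show "\<exists>x. prod_eq (phi x) g" unfolding prod_eq_def
    by (intro exI[of _ "(c 0 g, u)"]) (simp add: maxideals_def loc_0)
qed

end


lemma loc_mult_R: "maximal_ideal P \<Longrightarrow> y \<in> loc P \<Longrightarrow> Fract a 1 * y \<in> loc P"
  using loc_mult loc_R by blast

lemma LG_0: "(\<And>x. maximal_ideal (G x)) \<Longrightarrow> 0 \<in> LG G n"
  unfolding LG_def by (intro CollectI exI[of _ 1]) (simp add: loc_0)

lemma LG_add:
  assumes GM: "\<And>x. maximal_ideal (G x)" and f: "f \<in> LG G n" and g: "g \<in> LG G n"
  shows "f + g \<in> LG G n"
proof -
  obtain r where r: "r \<noteq> 0" "\<forall>m. Fract r 1 * f (G (n, m)) \<in> loc (G (n, m))"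
    using f unfolding LG_def by blast
  obtain s where s: "s \<noteq> 0" "\<forall>m. Fract s 1 * g (G (n, m)) \<in> loc (G (n, m))"
    using g unfolding LG_def by blast
  have "Fract (r * s) 1 * (f + g) (G (n, m)) \<in> loc (G (n, m))" for m
  proof -
    have rs: "Fract (r * s) 1 = Fract r 1 * Fract s 1" by simp
    have eq: "Fract (r * s) 1 * (f + g) (G (n, m)) =
      Fract s 1 * (Fract r 1 * f (G (n, m))) + Fract r 1 * (Fract s 1 * g (G (n, m)))"
      unfolding rs by (simp add: algebra_simps del: mult_fract)
    have m: "maximal_ideal (G (n, m))" by (rule GM)
    have a1: "Fract r 1 * f (G (n, m)) \<in> loc (G (n, m))" using r(2) by blast
    have a2: "Fract s 1 * g (G (n, m)) \<in> loc (G (n, m))" using s(2) by blast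
    show ?thesis unfolding eq by (rule loc_add[OF m loc_mult_R[OF m a1] loc_mult_R[OF m a2]])
  qed
  moreover have "r * s \<noteq> 0" using r s by simp
  ultimately show ?thesis unfolding LG_def by blast
qed

lemma LG_sc:
  assumes GM: "\<And>x. maximal_ideal (G x)" and f: "f \<in> LG G n"
  shows "sc a f \<in> LG G n"
proof -
  obtain r where r: "r \<noteq> 0" "\<forall>m. Fract r 1 * f (G (n, m)) \<in> loc (G (n, m))"
    using f unfolding LG_def by blast
  obtain p q where pq: "a = Fract p q" "q \<noteq> 0" by (rule Fract_cases)
  have "Fract (r * q) 1 * sc a f (G (n, m)) \<in> loc (G (n, m))" for m
  proof -
    have "Fract (r * q) 1 * a = Fract (q * (r * p)) (q * 1)" using pq by (simp add: algebra_simps)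
    also have "\<dots> = Fract (r * p) 1" using pq(2) by (rule mult_fract_cancel)
    also have "\<dots> = Fract p 1 * Fract r 1" by (simp add: algebra_simps)
    finally have eq: "Fract (r * q) 1 * sc a f (G (n, m)) = Fract p 1 * (Fract r 1 * f (G (n, m)))"
      by (simp add: mult.assoc)
    have m: "maximal_ideal (G (n, m))" by (rule GM)
    have a1: "Fract r 1 * f (G (n, m)) \<in> loc (G (n, m))" using r(2) by blast
    show ?thesis unfolding eq by (rule loc_mult_R[OF m a1])
  qed
  moreover have "r * q \<noteq> 0" using r pq by simp
  ultimately show ?thesis unfolding LG_def by blast
qed

lemma eG_notin:
  fixes T :: "'a::idom itself" and G :: "nat \<times> nat \<Rightarrow> 'a set"
  assumes D: "dedekind_domain T" and GM: "\<And>x. maximal_ideal (G x)" and Gi: "inj G"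
    and pi: "\<And>x. pi (G x) \<in> G x \<and> pi (G x) \<noteq> 0"
  shows "eG G pi n \<notin> LG G n"
proof
  assume "eG G pi n \<in> LG G n"
  then obtain r :: 'a where r: "r \<noteq> 0" "\<forall>m. Fract r 1 * eG G pi n (G (n, m)) \<in> loc (G (n, m))"
    unfolding LG_def by blast
  have idxG: "idx G (G (n, m)) = n" for m unfolding idx_def using Gi by simp
  have "r \<in> G (n, m)" for m
  proof -
    have "Fract r 1 * eG G pi n (G (n, m)) = Fract r (pi (G (n, m)))"
      by (simp add: eG_def idxG)
    then have "Fract r (pi (G (n, m))) \<in> loc (G (n, m))" using r(2) by metis
    then show ?thesis using loc_div_mem[OF GM] pi by blast
  qed
  then have "range (\<lambda>m. G (n, m)) \<subseteq> {P. maximal_ideal P \<and> r \<in> P}" using GM by blast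
  moreover have "infinite (range (\<lambda>m. G (n, m)))"
  proof -
    have "inj (\<lambda>m. G (n, m))" using Gi by (simp add: inj_def)
    show ?thesis
    proof
      assume "finite (range (\<lambda>m. G (n, m)))"
      then have "finite (UNIV :: nat set)" using finite_imageD \<open>inj (\<lambda>m. G (n, m))\<close> by blast
      then show False by simp
    qed
  qed
  ultimately show False using finite_max[OF D r(1)] finite_subset by blast
qed

lemma part2:
  fixes T :: "'a::idom itself"
  assumes D: "dedekind_domain T" and inf: "infinite (maxideals :: 'a set set)"
  shows "\<exists>\<phi> :: 'a fract \<times> ('a set \<Rightarrow> 'a fract) \<Rightarrow> ('a set \<Rightarrow> 'a fract). is_iso_Q_plus_prod \<phi>"
proof -
  have "infinite (maxideals - {{0::'a}})" using inf by (rule infinite_remove)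
  then obtain h :: "nat \<Rightarrow> 'a set" where h: "inj h" "range h \<subseteq> maxideals - {{0}}"
    using infinite_countable_subset by blast
  define G where "G = h \<circ> prod_encode"
  have Gi: "inj G" unfolding G_def using h(1) inj_prod_encode[of UNIV] by (rule inj_compose)
  have GX: "G x \<in> maxideals - {{0}}" for x using h(2) unfolding G_def by auto
  have GM: "maximal_ideal (G x)" for x using GX[of x] by (simp add: maxideals_def)
  define pi where "pi = (\<lambda>P :: 'a set. SOME x. x \<in> P \<and> x \<noteq> 0)"
  have pi: "pi (G x) \<in> G x \<and> pi (G x) \<noteq> 0" for x
  proof -
    have "G x \<noteq> {0}" using GX[of x] by simp
    moreover have "0 \<in> G x" using GM[of x] by (rule max_0)
    ultimately have "\<exists>y. y \<in> G x \<and> y \<noteq> 0" by blast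
    from someI_ex[OF this] show ?thesis unfolding pi_def .
  qed
  have ex: "\<exists>g. Vector_Spaces.linear sc (*) g \<and> (\<forall>x\<in>LG G n. g x = 0) \<and> g (eG G pi n) = 1" for n
  proof (rule functional_exists)
    show "0 \<in> LG G n" using GM by (rule LG_0)
    show "x + y \<in> LG G n" if "x \<in> LG G n" "y \<in> LG G n" for x y using GM that by (rule LG_add)
    show "sc a x \<in> LG G n" if "x \<in> LG G n" for a x using GM that by (rule LG_sc)
    show "eG G pi n \<notin> LG G n" using D GM Gi pi by (rule eG_notin)
  qed
  define c where "c = (\<lambda>n. SOME g. Vector_Spaces.linear sc (*) g \<and> (\<forall>x\<in>LG G n. g x = 0) \<and> g (eG G pi n) = 1)"
  have c: "Vector_Spaces.linear sc (*) (c n) \<and> (\<forall>x\<in>LG G n. c n x = 0) \<and> c n (eG G pi n) = 1" for n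
    using someI_ex[OF ex[of n]] unfolding c_def .
  interpret iso_setup G pi c
    by (rule iso_setup.intro) (use Gi GM c in auto)
  show ?thesis using iso by blast
qed


theorem mainTheorem10:
  fixes T :: "'a::idom itself"
  assumes "dedekind_domain T"
  shows "(\<forall>f :: 'a set \<Rightarrow> 'a fract. in_torsion f \<longleftrightarrow> in_dsum f) \<and>
         ((infinite (maxideals :: 'a set set) \<and>
           (card_of (UNIV :: 'a set), card_of (Func (maxideals :: 'a set set) (UNIV :: 'a set))) \<in> ordLess)
          \<longrightarrow> (\<exists>\<phi> :: 'a fract \<times> ('a set \<Rightarrow> 'a fract) \<Rightarrow> ('a set \<Rightarrow> 'a fract). is_iso_Q_plus_prod \<phi>))"
proof (intro conjI allI impI)
  fix f :: "'a set \<Rightarrow> 'a fract"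
  show "in_torsion f \<longleftrightarrow> in_dsum f" using assms by (rule part1)
next
  assume h: "infinite (maxideals :: 'a set set) \<and>
           (card_of (UNIV :: 'a set), card_of (Func (maxideals :: 'a set set) (UNIV :: 'a set))) \<in> ordLess"
  show "\<exists>\<phi> :: 'a fract \<times> ('a set \<Rightarrow> 'a fract) \<Rightarrow> ('a set \<Rightarrow> 'a fract). is_iso_Q_plus_prod \<phi>"
    using assms h[THEN conjunct1] by (rule part2)
qed

end
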